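(* Let $q$ be a power of $2$ and let $\mathcal{C}$ be the Hermitian-Lifted Code (defined in the context). Then the minimum Hamming distance $d$ of $\mathcal{C}$ satisfies $q^2 \leq d \leq q^3 - q^2 + 1$.
   Context: Let $\mathcal{X} = \{(x,y) \in (\mathbb{F}_{q^2})^2 : x^q + x = y^{q+1}\}$ (affine $\mathbb{F}_{q^2}$-points of the Hermitian curve, $|\mathcal{X}|=q^3$). For $\alpha,\beta\in\mathbb{F}_{q^2}$ let $L_{\alpha,\beta}(t) = (\alpha t+\beta,t)$ and $\mathcal{L}=\{L_{\alpha,\beta}\}$. Let $\mathcal{F}$ be the set of $f \in \mathbb{F}_{q^2}[x,y]$ such that for every $L \in \mathcal{L}$ there exists $g \in \mathbb{F}_{q^2}[t]$ with $\deg g \le q-1$ and $f(L(t)) = g(t)$ for all $t\in\mathbb{F}_{q^2}$ with $L(t)\in\mathcal{X}$. The Hermitian-Lifted Code is $\mathcal{C} = \{(f(P))_{P\in\mathcal{X}} : f\in\mathcal{F}\}$. *)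

theory Defs
  imports "HOL-Computational_Algebra.Polynomial"
begin

text \<open>Affine points of the Hermitian curve x^q + x = y^(q+1) over the field 'a
  (intended: 'a = F_{q^2}).\<close>
definition herm_pts :: "nat \<Rightarrow> ('a::field \<times> 'a) set" where
  "herm_pts q = {(x, y). x ^ q + x = y ^ (q + 1)}"

text \<open>Bivariate polynomials over 'a, represented by finitely supported coefficient
  functions a (i,j) = coefficient of x^i y^j; evaluation:\<close>
definition eval2 :: "(nat \<times> nat \<Rightarrow> 'a::field) \<Rightarrow> 'a \<times> 'a \<Rightarrow> 'a" where
  "eval2 a P = (\<Sum>(i, j)\<in>{p. a p \<noteq> 0}. a (i, j) * fst P ^ i * snd P ^ j)"

definition lifted_polys :: "nat \<Rightarrow> (nat \<times> nat \<Rightarrow> 'a::field) set" where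
  "lifted_polys q = {a. finite {p. a p \<noteq> 0} \<and>
     (\<forall>\<alpha> \<beta>. \<exists>g :: 'a poly. degree g \<le> q - 1 \<and>
        (\<forall>t. (\<alpha> * t + \<beta>, t) \<in> herm_pts q \<longrightarrow> eval2 a (\<alpha> * t + \<beta>, t) = poly g t))}"

text \<open>Hermitian-lifted code: codewords are evaluation vectors indexed by the curve
  points, represented as functions that vanish outside the curve.\<close>
definition herm_lifted_code :: "nat \<Rightarrow> ('a::field \<times> 'a \<Rightarrow> 'a) set" where
  "herm_lifted_code q =
     {(\<lambda>P. if P \<in> herm_pts q then eval2 a P else 0) | a. a \<in> lifted_polys q}"

definition min_dist :: "('i \<Rightarrow> 'a) set \<Rightarrow> 'i set \<Rightarrow> nat" where
  "min_dist C S = Min {card {P \<in> S. u P \<noteq> v P} | u v. u \<in> C \<and> v \<in> C \<and> u \<noteq> v}"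

end

theory Submission
  imports Defs
begin

lemma line_poly:
  fixes x0 :: "'a::comm_ring_1"
  assumes "(2::'a) = 0" "X + x0 = Y * y0" "Z * z = 1"
  shows "A * (Y + (y0 + A) * Z + (Y + al)) + X + A * Y + (al * (y0 + (Y + al) * z + (y0 + A)) + (x0 + al * y0))
     = (Y + (y0 + A) * Z + (Y + al)) * (y0 + (Y + al) * z + (y0 + A))" (is "?L = ?R")
proof -
  have "?R - ?L = (Y*y0 - X - x0) + (Y+al)*(y0+A)*(Z*z-1) + 2*(2*Y*y0 + Y^2*z + Y*z*al + y0^2*Z + A*y0*Z)"
    by (simp add: algebra_simps power2_eq_square)
  also have "\<dots> = 0" using assms by (simp add: algebra_simps)
  finally show ?thesis by simp
qed

lemma card_le_fibers:
  assumes "finite A" "\<And>a. a \<in> A \<Longrightarrow> card {x\<in>A. f x = f a} \<le> k"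
  shows "card A \<le> k * card (f ` A)"
proof -
  have eq: "(\<Union>b\<in>f ` A. {x\<in>A. f x = b}) = A" by auto
  have "card A \<le> (\<Sum>b\<in>f ` A. card {x\<in>A. f x = b})"
    using card_UN_le[of "f ` A" "\<lambda>b. {x\<in>A. f x = b}"] assms(1) eq by simp
  also have "\<dots> \<le> card (f ` A) * k"
    using sum_bounded_above[of "f ` A" "\<lambda>b. card {x\<in>A. f x = b}" k] assms(2) by auto
  finally show ?thesis by (simp add: mult.commute)
qed

lemma field_pow_card:
  fixes x :: "'a :: {finite,field}"
  shows   "x ^ card (UNIV :: 'a set) = x"
proof (cases "x = 0")
  case False
  have "x * (\<Prod>y\<in>UNIV-{0}. x * y) = x * x ^ (card (UNIV :: 'a set) - 1) * \<Prod>(UNIV-{0})"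
    by (simp add: prod.distrib mult_ac)
  also have "x * x ^ (card (UNIV :: 'a set) - 1) = x ^ Suc (card (UNIV :: 'a set) - 1)"
    by (subst power_Suc) auto
  also have "Suc (card (UNIV :: 'a set) - 1) = card (UNIV :: 'a set)"
    using finite_UNIV_card_ge_0[where ?'a = 'a] by simp
  also have "(\<Prod>y\<in>UNIV-{0}. x * y) = (\<Prod>y\<in>UNIV-{0}. y)"
    by (rule prod.reindex_bij_witness[of _ "\<lambda>y. y / x" "\<lambda>y. x * y"]) (use False in auto)
  finally show ?thesis
    by simp
qed (use finite_UNIV_card_ge_0[where ?'a = 'a] in auto)

lemma frob2:
  fixes a b :: "'a::comm_ring_1"
  assumes "(2::'a) = 0"
  shows "(a + b) ^ (2 ^ k) = a ^ (2 ^ k) + b ^ (2 ^ k)"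
proof (induction k)
  case 0 then show ?case by simp
next
  case (Suc k)
  have "(a + b) ^ (2 ^ Suc k) = ((a + b) ^ (2 ^ k))\<^sup>2" by (simp add: power_mult[symmetric] mult.commute)
  also have "\<dots> = (a ^ (2 ^ k))\<^sup>2 + (b ^ (2 ^ k))\<^sup>2" using Suc assms by (simp add: power2_sum)
  also have "\<dots> = a ^ (2 ^ Suc k) + b ^ (2 ^ Suc k)" by (simp add: power_mult[symmetric] mult.commute)
  finally show ?case .
qed

lemma lifted_D:
  assumes "a \<in> lifted_polys q"
  shows "\<exists>g :: 'a::field poly. degree g \<le> q - 1 \<and>
        (\<forall>t. (al * t + be, t) \<in> herm_pts q \<longrightarrow> eval2 a (al * t + be, t) = poly g t)"
  using assms unfolding lifted_polys_def by blast

context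
  fixes q m :: nat
  assumes qm: "q = 2 ^ m" and cardq: "card (UNIV :: 'a::{finite,field} set) = q ^ 2"
begin

lemma q_ge2: "q \<ge> 2"
proof -
  have "card {0::'a, 1} \<le> card (UNIV :: 'a set)" by (rule card_mono) auto
  hence "2 \<le> q ^ 2" using cardq by simp
  show ?thesis
  proof (rule ccontr)
    assume "\<not> 2 \<le> q"
    hence "q = 0 \<or> q = 1" by auto
    thus False using \<open>2 \<le> q ^ 2\<close> by auto
  qed
qed

lemma m_pos: "m \<ge> 1"
  using q_ge2 qm by (cases m) auto

lemma powq2: "(x::'a) ^ (q ^ 2) = x"
  using field_pow_card[of x] cardq by simp

lemma two0: "(2::'a) = 0"
proof -
  have "even (q ^ 2)" using qm m_pos by (cases m) auto
  hence "(-1::'a) ^ (q^2) = 1" by simp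
  moreover have "(-1::'a) ^ (q^2) = -1" by (rule powq2)
  ultimately have "(1::'a) = -1" by simp
  hence "(1::'a) + 1 = 0" by (metis add.right_inverse)
  thus ?thesis by simp
qed

lemma dbl[simp]: "(c::'a) + c = 0"
  using two0 by (metis mult_2 mult_zero_left)

lemma dbl2[simp]: "(c::'a) + (c + d) = d"
  by (metis add.assoc add_0 dbl)

lemma neg_self[simp]: "- (c::'a) = c"
  by (metis add_eq_0_iff dbl)

lemma frob_add[simp]: "((a::'a) + b) ^ q = a ^ q + b ^ q"
  using frob2[OF two0] qm by simp

lemma frob_inv[simp]: "((a::'a) ^ q) ^ q = a"
  using powq2[of a] by (simp add: power_mult[symmetric] power2_eq_square)

lemma card_Fq_le: "card {a::'a. a ^ q = a} \<le> q"
proof -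
  let ?p = "monom (1::'a) q - [:0, 1:]"
  have "coeff [:0, 1::'a:] q = 0" using q_ge2 by (intro coeff_eq_0) simp
  hence c: "coeff ?p q = 1" unfolding coeff_diff by simp
  have nz: "?p \<noteq> 0"
  proof
    assume "?p = 0"
    hence "coeff ?p q = 0" by (simp only: coeff_0)
    with c show False by simp
  qed
  have "degree ?p \<le> q"
    using degree_diff_le_max[of "monom (1::'a) q" "[:0,1:]"] q_ge2 by (simp add: degree_monom_eq)
  moreover have "{x. poly ?p x = 0} = {a::'a. a ^ q = a}"
    by (auto simp: poly_monom)
  ultimately show ?thesis using card_poly_roots_bound[OF nz] by simp
qed

lemma T_fiber_card: "card {x::'a. x ^ q + x = c ^ q + c} \<le> q"
proof -
  have "{x::'a. x ^ q + x = c ^ q + c} \<subseteq> (\<lambda>z. c + z) ` {a::'a. a ^ q = a}"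
  proof
    fix x :: 'a assume "x \<in> {x::'a. x ^ q + x = c ^ q + c}"
    hence hx: "x ^ q + x = c ^ q + c" by simp
    have "(x + c) ^ q = x ^ q + c ^ q" by simp
    also have "\<dots> = x + c" using hx by (metis add.assoc add.commute dbl2)
    finally have "x + c \<in> {a. a ^ q = a}" by simp
    moreover have "x = c + (x + c)" by (metis add.commute dbl2)
    ultimately show "x \<in> (\<lambda>z. c + z) ` {a::'a. a ^ q = a}" by blast
  qed
  hence "card {x::'a. x ^ q + x = c ^ q + c} \<le> card ((\<lambda>z. c + z) ` {a::'a. a ^ q = a})"
    by (intro card_mono) auto
  also have "\<dots> \<le> card {a::'a. a ^ q = a}" by (rule card_image_le) auto
  finally show ?thesis using card_Fq_le by linarith
qed

lemma T_range: "range (\<lambda>c::'a. c ^ q + c) = {a::'a. a ^ q = a}"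
proof -
  have sub: "range (\<lambda>c::'a. c ^ q + c) \<subseteq> {a::'a. a ^ q = a}"
    by (auto simp: add.commute)
  have "card (UNIV::'a set) \<le> q * card (range (\<lambda>c::'a. c ^ q + c))"
    by (rule card_le_fibers) (auto intro: T_fiber_card)
  hence "q * q \<le> q * card (range (\<lambda>c::'a. c ^ q + c))" using cardq by (simp add: power2_eq_square)
  hence "q \<le> card (range (\<lambda>c::'a. c ^ q + c))" using q_ge2 by simp
  moreover have "card (range (\<lambda>c::'a. c ^ q + c)) \<le> card {a::'a. a ^ q = a}"
    using sub by (intro card_mono) auto
  ultimately have "card (range (\<lambda>c::'a. c ^ q + c)) = card {a::'a. a ^ q = a}"
    using card_Fq_le by linarith
  thus ?thesis using sub by (intro card_subset_eq) auto
qed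

lemma card_Fq: "card {a::'a. a ^ q = a} = q"
proof -
  have "card (UNIV::'a set) \<le> q * card (range (\<lambda>c::'a. c ^ q + c))"
    by (rule card_le_fibers) (auto intro: T_fiber_card)
  hence "q * q \<le> q * card {a::'a. a ^ q = a}" using cardq T_range by (simp add: power2_eq_square)
  hence "q \<le> card {a::'a. a ^ q = a}" using q_ge2 by simp
  thus ?thesis using card_Fq_le by linarith
qed

lemma fiber1_card: "q \<le> card {c::'a. c ^ q + c = 1}"
proof -
  have "(1::'a) \<in> range (\<lambda>c::'a. c ^ q + c)" using T_range by simp
  then obtain c0 :: 'a where c0: "c0 ^ q + c0 = 1" by auto
  have "(\<lambda>z. c0 + z) ` {a::'a. a ^ q = a} \<subseteq> {c::'a. c ^ q + c = 1}"
  proof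
    fix y assume "y \<in> (\<lambda>z. c0 + z) ` {a::'a. a ^ q = a}"
    then obtain z where z: "z ^ q = z" "y = c0 + z" by auto
    have "y ^ q + y = (c0 ^ q + c0) + (z ^ q + z)" using z by (simp add: algebra_simps)
    thus "y \<in> {c::'a. c ^ q + c = 1}" using c0 z by simp
  qed
  hence "card ((\<lambda>z. c0 + z) ` {a::'a. a ^ q = a}) \<le> card {c::'a. c ^ q + c = 1}"
    by (intro card_mono) auto
  moreover have "card ((\<lambda>z. c0 + z) ` {a::'a. a ^ q = a}) = q"
    using card_Fq by (subst card_image) (auto simp: inj_on_def)
  ultimately show ?thesis by simp
qed

lemma card_mu: "q + 1 \<le> card {z::'a. z ^ (q + 1) = 1}"
proof -
  let ?mu = "{z::'a. z ^ (q + 1) = 1}"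
  let ?A = "UNIV - {0::'a}"
  let ?N = "\<lambda>y::'a. y ^ (q + 1)"
  have "card ?A \<le> card ?mu * card (?N ` ?A)"
  proof (rule card_le_fibers)
    fix y assume y: "y \<in> ?A"
    have "{x \<in> ?A. ?N x = ?N y} \<subseteq> (\<lambda>z. y * z) ` ?mu"
    proof
      fix x assume x: "x \<in> {x \<in> ?A. ?N x = ?N y}"
      have "(x / y) ^ (q + 1) = 1" using x y by (simp add: power_divide)
      moreover have "x = y * (x / y)" using y by simp
      ultimately show "x \<in> (\<lambda>z. y * z) ` ?mu" by blast
    qed
    hence "card {x \<in> ?A. ?N x = ?N y} \<le> card ((\<lambda>z. y * z) ` ?mu)" by (intro card_mono) auto
    also have "\<dots> \<le> card ?mu" by (rule card_image_le) auto
    finally show "card {x \<in> ?A. ?N x = ?N y} \<le> card ?mu" .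
  qed simp
  moreover have "?N ` ?A \<subseteq> {a::'a. a ^ q = a} - {0}"
  proof
    fix w assume "w \<in> ?N ` ?A"
    then obtain y :: 'a where y: "y \<noteq> 0" "w = y ^ (q + 1)" by auto
    have "w ^ q = (y ^ q) ^ q * y ^ q" using y by (simp add: power_mult_distrib)
    also have "\<dots> = w" using y by (simp add: mult.commute)
    finally show "w \<in> {a::'a. a ^ q = a} - {0}" using y by simp
  qed
  hence "card (?N ` ?A) \<le> card ({a::'a. a ^ q = a} - {0})" by (intro card_mono) auto
  moreover have "card ({a::'a. a ^ q = a} - {0}) = q - 1"
    using card_Fq q_ge2 by (subst card_Diff_singleton) auto
  moreover have "card ?A = q ^ 2 - 1" using cardq by (simp add: card_Diff_singleton)
  ultimately have "q ^ 2 - 1 \<le> card ?mu * (q - 1)"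
    by (metis (no_types, lifting) dual_order.trans mult_le_mono2)
  moreover have "q ^ 2 - 1 = (q + 1) * (q - 1)" using q_ge2
    by (cases q) (auto simp: power2_eq_square)
  ultimately have "(q + 1) * (q - 1) \<le> card ?mu * (q - 1)" by simp
  thus ?thesis using mult_le_cancel2[of "q+1" "q-1" "card ?mu"] q_ge2 by simp
qed

lemma card_X: "card (herm_pts q :: ('a \<times> 'a) set) \<le> q ^ 3"
proof -
  have "card (herm_pts q :: ('a \<times> 'a) set) \<le> q * card (snd ` (herm_pts q :: ('a \<times> 'a) set))"
  proof (rule card_le_fibers)
    fix P assume P: "P \<in> (herm_pts q :: ('a \<times> 'a) set)"
    obtain x0 y0 where P0: "P = (x0, y0)" by (cases P)
    have "{Q \<in> herm_pts q. snd Q = snd P} \<subseteq> (\<lambda>x. (x, y0)) ` {x::'a. x ^ q + x = x0 ^ q + x0}"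
      using P unfolding P0 herm_pts_def by auto
    hence "card {Q \<in> herm_pts q. snd Q = snd P} \<le> card ((\<lambda>x. (x, y0)) ` {x::'a. x ^ q + x = x0 ^ q + x0})"
      by (intro card_mono) auto
    also have "\<dots> \<le> card {x::'a. x ^ q + x = x0 ^ q + x0}" by (rule card_image_le) auto
    finally show "card {Q \<in> herm_pts q. snd Q = snd P} \<le> q" using T_fiber_card[of x0] by linarith
  qed simp
  also have "\<dots> \<le> q * card (UNIV :: 'a set)" by (intro mult_le_mono2 card_mono) auto
  finally show ?thesis using cardq by (simp add: power2_eq_square power3_eq_cube)
qed


lemma line_card:
  assumes P0X: "(x0, y0) \<in> (herm_pts q :: ('a \<times> 'a) set)" and al: "al \<noteq> y0 ^ q"
  shows "q + 1 \<le> card {t::'a. (al * t + (x0 + al * y0), t) \<in> herm_pts q}"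
proof -
  let ?mu = "{z::'a. z ^ (q + 1) = 1}"
  let ?L = "{t::'a. (al * t + (x0 + al * y0), t) \<in> herm_pts q}"
  define g where "g = y0 ^ q + al"
  have gnz: "g \<noteq> 0"
  proof
    assume "g = 0"
    have "al = y0 ^ q + g" unfolding g_def by (simp only: dbl2)
    with \<open>g = 0\<close> al show False by simp
  qed
  define h where "h = (\<lambda>z. y0 + (y0 ^ q + al) * z + (y0 + al ^ q))"
  have curve: "x0 ^ q + x0 = y0 ^ q * y0" using P0X by (simp add: herm_pts_def mult.commute)
  have "h ` ?mu \<subseteq> ?L"
  proof
    fix t assume "t \<in> h ` ?mu"
    then obtain z where z: "z ^ (q + 1) = 1" and t: "t = h z" by auto
    have zz: "z ^ q * z = 1" using z by (simp add: mult.commute)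
    have tq: "t ^ q = y0 ^ q + (y0 + al ^ q) * z ^ q + (y0 ^ q + al)"
      unfolding t h_def by (simp only: frob_add power_mult_distrib frob_inv)
    have lq: "(al * t + (x0 + al * y0)) ^ q = al ^ q * t ^ q + x0 ^ q + al ^ q * y0 ^ q"
      by (simp add: power_mult_distrib add.assoc)
    have "(al * t + (x0 + al * y0)) ^ q + (al * t + (x0 + al * y0)) = t ^ q * t"
      unfolding lq tq unfolding t h_def by (rule line_poly[OF two0 curve zz])
    thus "t \<in> ?L" by (simp add: herm_pts_def power_Suc2[symmetric])
  qed
  hence "card (h ` ?mu) \<le> card ?L" by (intro card_mono) auto
  moreover have "inj_on h ?mu"
  proof (rule inj_onI)
    fix z1 z2 assume "h z1 = h z2"
    hence "g * z1 = g * z2" unfolding h_def g_def by (metis add_left_cancel add_right_cancel)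
    thus "z1 = z2" using gnz by simp
  qed
  hence "card (h ` ?mu) = card ?mu" by (rule card_image)
  ultimately show ?thesis using card_mu by linarith
qed

lemma eval2_sup:
  assumes "finite S" "{p. a p \<noteq> 0} \<subseteq> S"
  shows "eval2 a P = (\<Sum>(i, j)\<in>S. a (i, j) * fst P ^ i * snd P ^ j)"
  unfolding eval2_def by (rule sum.mono_neutral_left) (use assms in auto)

lemma lower:
  assumes "u \<in> (herm_lifted_code q :: ('a \<times> 'a \<Rightarrow> 'a) set)" "v \<in> herm_lifted_code q" "u \<noteq> v"
  shows "q ^ 2 \<le> card {P \<in> (herm_pts q :: ('a \<times> 'a) set). u P \<noteq> v P}"
proof -
  let ?X = "herm_pts q :: ('a \<times> 'a) set"
  obtain a where a: "a \<in> lifted_polys q" and ua: "u = (\<lambda>P. if P \<in> ?X then eval2 a P else 0)"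
    using assms(1) unfolding herm_lifted_code_def by auto
  obtain b where b: "b \<in> lifted_polys q" and ub: "v = (\<lambda>P. if P \<in> ?X then eval2 b P else 0)"
    using assms(2) unfolding herm_lifted_code_def by auto
  obtain P0 where uv0: "u P0 \<noteq> v P0" using assms(3) by (meson ext)
  hence P0X: "P0 \<in> ?X" using ua ub by (cases "P0 \<in> ?X") simp_all
  obtain x0 y0 where P0: "P0 = (x0, y0)" by (cases P0)
  have key: "\<forall>al. \<exists>t. al \<noteq> y0 ^ q \<longrightarrow> ((al * t + (x0 + al * y0), t) \<in> ?X \<and> t \<noteq> y0 \<and>
              u (al * t + (x0 + al * y0), t) \<noteq> v (al * t + (x0 + al * y0), t))"
  proof (intro allI)
    fix al :: 'a
    show "\<exists>t. al \<noteq> y0 ^ q \<longrightarrow> ((al * t + (x0 + al * y0), t) \<in> ?X \<and> t \<noteq> y0 \<and>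
              u (al * t + (x0 + al * y0), t) \<noteq> v (al * t + (x0 + al * y0), t))"
    proof (cases "al = y0 ^ q")
      case True then show ?thesis by blast
    next
      case False
      note al = False
      let ?be = "x0 + al * y0"
      obtain ga :: "'a poly" where ga: "degree ga \<le> q - 1"
        "\<forall>t. (al * t + ?be, t) \<in> ?X \<longrightarrow> eval2 a (al * t + ?be, t) = poly ga t"
        using lifted_D[OF a, of al ?be] by (elim exE conjE) (rule that)
      obtain gb :: "'a poly" where gb: "degree gb \<le> q - 1"
        "\<forall>t. (al * t + ?be, t) \<in> ?X \<longrightarrow> eval2 b (al * t + ?be, t) = poly gb t"
        using lifted_D[OF b, of al ?be] by (elim exE conjE) (rule that)
      let ?G = "ga - gb"
      have onl: "u (al * t + ?be, t) - v (al * t + ?be, t) = poly ?G t" if ht: "(al * t + ?be, t) \<in> ?X" for t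
      proof -
        have "u (al * t + ?be, t) = eval2 a (al * t + ?be, t)" unfolding ua by (rule if_P[OF ht])
        also have "\<dots> = poly ga t" using ga(2) ht by blast
        finally have 1: "u (al * t + ?be, t) = poly ga t" .
        have "v (al * t + ?be, t) = eval2 b (al * t + ?be, t)" unfolding ub by (rule if_P[OF ht])
        also have "\<dots> = poly gb t" using gb(2) ht by blast
        finally have 2: "v (al * t + ?be, t) = poly gb t" .
        show ?thesis unfolding 1 2 by simp
      qed
      have "al * y0 + ?be = al * y0 + (al * y0 + x0)" by (simp only: add.commute[of x0])
      hence x0e: "al * y0 + ?be = x0" by (simp only: dbl2)
      have "poly ?G y0 \<noteq> 0" using onl[of y0] P0X P0 uv0 x0e by auto
      hence Gnz: "?G \<noteq> 0" by auto
      have degG: "degree ?G \<le> q - 1" using degree_diff_le[OF ga(1) gb(1)] .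
      let ?L = "{t. (al * t + ?be, t) \<in> ?X}"
      have L: "q + 1 \<le> card ?L" using line_card[OF P0X[unfolded P0] al] .
      let ?R = "{t. poly ?G t = 0}"
      have R: "card ?R \<le> q - 1" using card_poly_roots_bound[OF Gnz] degG by linarith
      have "card (insert y0 ?R) \<le> Suc (card ?R)" by (simp add: card_insert_if)
      hence R2: "card (insert y0 ?R) \<le> q" using R q_ge2 by linarith
      have "card ?L - card (insert y0 ?R) \<le> card (?L - insert y0 ?R)"
        by (rule diff_card_le_card_Diff) simp
      hence "card (?L - insert y0 ?R) \<noteq> 0" using L R2 by linarith
      hence "?L - insert y0 ?R \<noteq> {}" by (metis card.empty)
      then obtain t where t: "t \<in> ?L" "t \<noteq> y0" "poly ?G t \<noteq> 0" by auto
      have "u (al * t + ?be, t) - v (al * t + ?be, t) \<noteq> 0" using onl[of t] t by simp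
      thus ?thesis using t by auto
    qed
  qed
  then obtain tt where tt: "\<And>al. al \<noteq> y0 ^ q \<Longrightarrow> (al * tt al + (x0 + al * y0), tt al) \<in> ?X \<and> tt al \<noteq> y0 \<and>
              u (al * tt al + (x0 + al * y0), tt al) \<noteq> v (al * tt al + (x0 + al * y0), tt al)"
    by metis
  define phi where "phi = (\<lambda>al. (al * tt al + (x0 + al * y0), tt al))"
  have inj: "inj_on phi (UNIV - {y0 ^ q})"
  proof (rule inj_onI)
    fix a1 a2 assume a1: "a1 \<in> UNIV - {y0 ^ q}" and a2: "a2 \<in> UNIV - {y0 ^ q}" and eq: "phi a1 = phi a2"
    let ?t = "tt a1"
    have tt12: "tt a2 = ?t" using eq unfolding phi_def by simp
    have "a1 * ?t + (x0 + a1 * y0) = a2 * ?t + (x0 + a2 * y0)" using eq tt12 unfolding phi_def by simp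
    hence "a1 * ?t + a1 * y0 = a2 * ?t + a2 * y0" by (metis add.left_commute add_left_cancel)
    hence e: "a1 * (?t + y0) = a2 * (?t + y0)" by (simp add: distrib_left)
    have "?t \<noteq> y0" using tt a1 by auto
    hence "?t + y0 \<noteq> 0" by (metis add.commute dbl2 add_0_right)
    thus "a1 = a2" using e by simp
  qed
  have sub: "insert P0 (phi ` (UNIV - {y0 ^ q})) \<subseteq> {P \<in> ?X. u P \<noteq> v P}"
    using tt P0X uv0 unfolding phi_def by auto
  have notin: "P0 \<notin> phi ` (UNIV - {y0 ^ q})" using tt P0 unfolding phi_def by auto
  have "card (insert P0 (phi ` (UNIV - {y0 ^ q}))) = Suc (card (UNIV - {y0 ^ q}))"
    using notin card_image[OF inj] by simp
  also have "\<dots> = q ^ 2" using cardq q_ge2 by (simp add: card_Diff_singleton)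
  finally show ?thesis using card_mono[OF _ sub] by simp
qed


lemma upper_exists:
  "\<exists>u v. u \<in> (herm_lifted_code q :: ('a \<times> 'a \<Rightarrow> 'a) set) \<and> v \<in> herm_lifted_code q \<and> u \<noteq> v \<and>
     card {P \<in> (herm_pts q :: ('a \<times> 'a) set). u P \<noteq> v P} \<le> q ^ 3 - q ^ 2 + 1"
proof -
  let ?X = "herm_pts q :: ('a \<times> 'a) set"
  let ?mu = "{z::'a. z ^ (q + 1) = 1}"
  obtain C where C: "C \<subseteq> {c::'a. c ^ q + c = 1}" "card C = q - 1" "finite C"
    using obtain_subset_with_card_n[of "q - 1" "{c::'a. c ^ q + c = 1}"] fiber1_card by force
  define G where "G = (\<Prod>c\<in>C. [:- c, 1:])"
  have polyG: "\<And>x. poly G x = (\<Prod>c\<in>C. x - c)" by (simp add: G_def poly_prod del: neg_self)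
  have "degree G \<le> sum (degree \<circ> (\<lambda>c. [:- c, 1:])) C"
    unfolding G_def by (rule degree_prod_sum_le[OF C(3)])
  hence degG: "degree G \<le> q - 1" using C(2) by simp
  define a0 where "a0 = (\<lambda>(i::nat, j::nat). if j = 0 then coeff G i else (0::'a))"
  have supp: "{p. a0 p \<noteq> 0} \<subseteq> (\<lambda>i. (i, 0)) ` {..degree G}"
  proof
    fix p assume "p \<in> {p. a0 p \<noteq> 0}"
    then obtain i j where p: "p = (i, j)" "a0 (i, j) \<noteq> 0" by (cases p) auto
    hence "j = 0" "coeff G i \<noteq> 0" unfolding a0_def by (auto split: if_splits)
    thus "p \<in> (\<lambda>i. (i, 0)) ` {..degree G}" using p le_degree by auto
  qed
  have ev: "eval2 a0 P = poly G (fst P)" for P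
  proof -
    have "eval2 a0 P = (\<Sum>(i, j)\<in>(\<lambda>i. (i, 0)) ` {..degree G}. a0 (i, j) * fst P ^ i * snd P ^ j)"
      by (rule eval2_sup[OF _ supp]) simp
    also have "\<dots> = (\<Sum>i\<le>degree G. coeff G i * fst P ^ i)"
      by (subst sum.reindex) (auto simp: inj_on_def a0_def)
    finally show ?thesis by (simp add: poly_altdef)
  qed
  have a0L: "a0 \<in> lifted_polys q"
    unfolding lifted_polys_def
  proof (intro CollectI conjI allI)
    show "finite {p. a0 p \<noteq> 0}" using supp by (rule finite_subset) simp
    fix al be :: 'a
    let ?g = "pcompose G [:be, al:]"
    have "degree ?g = degree G * degree [:be, al:]" by (rule degree_pcompose)
    also have "\<dots> \<le> (q - 1) * 1" using degG by (intro mult_le_mono) auto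
    finally have dg: "degree ?g \<le> q - 1" by simp
    have "\<forall>t. (al * t + be, t) \<in> ?X \<longrightarrow> eval2 a0 (al * t + be, t) = poly ?g t"
      by (simp add: ev poly_pcompose algebra_simps)
    with dg show "\<exists>g :: 'a poly. degree g \<le> q - 1 \<and>
        (\<forall>t. (al * t + be, t) \<in> herm_pts q \<longrightarrow> eval2 a0 (al * t + be, t) = poly g t)" by blast
  qed
  have e0: "eval2 (\<lambda>_. 0::'a) P = 0" for P by (simp add: eval2_def)
  have z0L: "(\<lambda>_. 0::'a) \<in> lifted_polys q"
    unfolding lifted_polys_def by (auto simp: e0 intro: exI[of _ 0])
  define u0 where "u0 = (\<lambda>P. if P \<in> ?X then eval2 a0 P else 0)"
  define v0 where "v0 = (\<lambda>P. if P \<in> ?X then eval2 (\<lambda>_. 0::'a) P else 0)"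
  have u0C: "u0 \<in> herm_lifted_code q" unfolding herm_lifted_code_def u0_def using a0L by blast
  have v0C: "v0 \<in> herm_lifted_code q" unfolding herm_lifted_code_def v0_def using z0L by blast
  have v0z: "v0 P = 0" for P unfolding v0_def e0 by simp
  have X00: "(0, 0) \<in> ?X" using q_ge2 by (simp add: herm_pts_def)
  have "0 \<notin> C"
  proof
    assume "0 \<in> C"
    hence "(0::'a) ^ q + 0 = 1" using C(1) by auto
    thus False using q_ge2 by (simp add: power_0_left)
  qed
  hence "poly G 0 \<noteq> 0" unfolding polyG using C(3) by auto
  hence "u0 (0, 0) \<noteq> v0 (0, 0)" unfolding v0z u0_def using X00 ev by simp
  hence neq: "u0 \<noteq> v0" by auto
  have CmuX: "C \<times> ?mu \<subseteq> ?X" using C(1) by (auto simp: herm_pts_def)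
  have "{P \<in> ?X. u0 P \<noteq> v0 P} \<subseteq> ?X - C \<times> ?mu"
  proof
    fix P assume P: "P \<in> {P \<in> ?X. u0 P \<noteq> v0 P}"
    hence "poly G (fst P) \<noteq> 0" unfolding v0z u0_def using ev[of P] by auto
    hence "fst P \<notin> C" unfolding polyG using C(3) by auto
    thus "P \<in> ?X - C \<times> ?mu" using P by auto
  qed
  hence "card {P \<in> ?X. u0 P \<noteq> v0 P} \<le> card (?X - C \<times> ?mu)" by (intro card_mono) auto
  also have "\<dots> = card ?X - card (C \<times> ?mu)" by (rule card_Diff_subset) (use CmuX in auto)
  also have "card (C \<times> ?mu) = (q - 1) * card ?mu" using C(2) by (simp add: card_cartesian_product)
  finally have w: "card {P \<in> ?X. u0 P \<noteq> v0 P} \<le> card ?X - (q - 1) * card ?mu" .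
  have "(q - 1) * (q + 1) \<le> (q - 1) * card ?mu" using card_mu by (rule mult_le_mono2)
  moreover have "(q - 1) * (q + 1) = q ^ 2 - 1" using q_ge2 by (cases q) (auto simp: power2_eq_square)
  moreover have "q ^ 2 \<le> q ^ 3" using q_ge2 by (intro power_increasing) auto
  moreover have "1 \<le> q ^ 2" using q_ge2 by simp
  ultimately have "card {P \<in> ?X. u0 P \<noteq> v0 P} \<le> q ^ 3 - q ^ 2 + 1"
    using w card_X by linarith
  thus ?thesis using u0C v0C neq by blast
qed


end

theorem mainTheorem8:
  fixes q m :: nat
  assumes "q = 2 ^ m"
    and "card (UNIV :: 'a::{finite,field} set) = q ^ 2"
  shows "q ^ 2 \<le> min_dist (herm_lifted_code q :: ('a \<times> 'a \<Rightarrow> 'a) set) (herm_pts q)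
       \<and> min_dist (herm_lifted_code q :: ('a \<times> 'a \<Rightarrow> 'a) set) (herm_pts q) \<le> q ^ 3 - q ^ 2 + 1"
proof -
  let ?X = "herm_pts q :: ('a \<times> 'a) set"
  let ?C = "herm_lifted_code q :: ('a \<times> 'a \<Rightarrow> 'a) set"
  let ?S = "{card {P \<in> ?X. u P \<noteq> v P} | u v. u \<in> ?C \<and> v \<in> ?C \<and> u \<noteq> v}"
  have "?S \<subseteq> {..card (UNIV :: ('a \<times> 'a) set)}" by (auto intro!: card_mono)
  hence fin: "finite ?S" by (rule finite_subset) simp
  obtain u0 v0 where uv: "u0 \<in> ?C" "v0 \<in> ?C" "u0 \<noteq> v0"
    and w: "card {P \<in> ?X. u0 P \<noteq> v0 P} \<le> q ^ 3 - q ^ 2 + 1"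
    using upper_exists[OF assms] by blast
  have inS: "card {P \<in> ?X. u0 P \<noteq> v0 P} \<in> ?S" using uv by blast
  hence ne: "?S \<noteq> {}" by blast
  have "q ^ 2 \<le> Min ?S"
    using fin ne by (rule Min.boundedI) (auto intro: lower[OF assms])
  moreover have "Min ?S \<le> q ^ 3 - q ^ 2 + 1" using Min_le[OF fin inS] w by linarith
  ultimately show ?thesis unfolding min_dist_def by simp
qed

end
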